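(* Let $\iota$ be a unimodal sp-implication, let $(\mathfrak F_i)_{i\in I}$ be a family of frames and $\mathfrak G$ a frame with $(\mathfrak F_i)_{i\in I}\gg\mathfrak G$. If $\mathfrak F_i$ validates $\iota$ for every $i\in I$, then $\mathfrak G$ validates $\iota$.
   Context: Unimodal setting: one diamond $\Diamond$; sp-formulas built from variables and $\top$ by $\wedge,\Diamond$; sp-implications $\sigma\to\tau$; frames $(W,R)$ with standard Kripke semantics, a frame validating $\sigma\to\tau$ if at every point of every model over it $\sigma$ implies $\tau$. A homomorphism $h:(W_1,R_1)\to(W_2,R_2)$ is a map with $(x,y)\in R_1\Rightarrow(h(x),h(y))\in R_2$. A finite tree is a finite frame $(T,R^{\mathfrak T})$ that is a directed tree (irreflexive, with a root from which every point is reached by a unique path). Let $\mathfrak F_i=(W_i,R_i)$ ($i\in I$), $\mathfrak G=(W,R^{\mathfrak G})$, $\mathfrak T=(T,R^{\mathfrak T})$ be frames, $w\in T$, $g_i:\mathfrak T\to\mathfrak F_i$ and $h:\mathfrak T\to\mathfrak G$ homomorphisms, and $Z\subseteq(\prod_{i\in I}W_i)\times W$. Write $(\mathfrak F_i,g_i)_{i\in I}\gg_Z(\mathfrak G,h,w)$ if: (s1) $((g_i(w))_{i\in I},h(w))\in Z$; (s2) for all $(\bar x,y)\in Z$ and $\bar x'=(x'_i)_{i\in I}\in\prod_iW_i$ with $(x_i,x'_i)\in R_i$ for all $i$, there is $y'$ with $(y,y')\in R^{\mathfrak G}$ and $(\bar x',y')\in Z$; (s3) for all $(\bar x,y)\in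 Z$ and $A\subseteq T$, if $x_i\in g_i[A]$ for all $i\in I$ then $y\in h[A]$. Write $(\mathfrak F_i)_{i\in I}\gg\mathfrak G$ if for every finite tree $\mathfrak T$ with root $w$ and every homomorphism $h:\mathfrak T\to\mathfrak G$ there exist homomorphisms $g_i:\mathfrak T\to\mathfrak F_i$ ($i\in I$) and $Z$ such that $(\mathfrak F_i,g_i)_{i\in I}\gg_Z(\mathfrak G,h,w)$. *)

theory Defs
  imports Main "HOL-Library.FuncSet"
begin

datatype spf = Var nat | Top | Conj spf spf | Dia spf

text \<open>An sp-implication sigma -> tau is represented as the pair (sigma, tau).\<close>
type_synonym spimp = "spf \<times> spf"

definition is_frame :: "'a set \<Rightarrow> ('a \<times> 'a) set \<Rightarrow> bool" where
  "is_frame W R \<longleftrightarrow> R \<subseteq> W \<times> W"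

fun sat :: "('a \<times> 'a) set \<Rightarrow> (nat \<Rightarrow> 'a set) \<Rightarrow> 'a \<Rightarrow> spf \<Rightarrow> bool" where
  "sat R V x (Var p) = (x \<in> V p)"
| "sat R V x Top = True"
| "sat R V x (Conj a b) = (sat R V x a \<and> sat R V x b)"
| "sat R V x (Dia a) = (\<exists>y. (x, y) \<in> R \<and> sat R V y a)"

definition frame_valid :: "'a set \<Rightarrow> ('a \<times> 'a) set \<Rightarrow> spimp \<Rightarrow> bool" where
  "frame_valid W R \<iota> \<longleftrightarrow>
     (\<forall>V. (\<forall>p. V p \<subseteq> W) \<longrightarrow> (\<forall>x\<in>W. sat R V x (fst \<iota>) \<longrightarrow> sat R V x (snd \<iota>)))"

definition is_hom :: "'a set \<Rightarrow> ('a \<times> 'a) set \<Rightarrow> 'b set \<Rightarrow> ('b \<times> 'b) set \<Rightarrow> ('a \<Rightarrow> 'b) \<Rightarrow> bool" where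
  "is_hom W1 R1 W2 R2 h \<longleftrightarrow> h ` W1 \<subseteq> W2 \<and> (\<forall>x y. (x, y) \<in> R1 \<longrightarrow> (h x, h y) \<in> R2)"

definition rpath :: "('a \<times> 'a) set \<Rightarrow> 'a list \<Rightarrow> bool" where
  "rpath R xs \<longleftrightarrow> xs \<noteq> [] \<and> (\<forall>i. Suc i < length xs \<longrightarrow> (xs ! i, xs ! Suc i) \<in> R)"

definition finite_tree_root :: "'t set \<Rightarrow> ('t \<times> 't) set \<Rightarrow> 't \<Rightarrow> bool" where
  "finite_tree_root T R r \<longleftrightarrow> finite T \<and> is_frame T R \<and> irrefl R \<and> r \<in> T \<and>
     (\<forall>x\<in>T. \<exists>!xs. rpath R xs \<and> hd xs = r \<and> last xs = x)"

definition simZ ::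
  "'i set \<Rightarrow> ('i \<Rightarrow> 'a set) \<Rightarrow> ('i \<Rightarrow> ('a \<times> 'a) set) \<Rightarrow> ('i \<Rightarrow> 't \<Rightarrow> 'a) \<Rightarrow>
   'b set \<Rightarrow> ('b \<times> 'b) set \<Rightarrow> ('t \<Rightarrow> 'b) \<Rightarrow> 't set \<Rightarrow> 't \<Rightarrow> (('i \<Rightarrow> 'a) \<times> 'b) set \<Rightarrow> bool" where
  "simZ I W R g WG RG h T w Z \<longleftrightarrow>
     Z \<subseteq> (PiE I W) \<times> WG \<and>
     ((\<lambda>i\<in>I. g i w), h w) \<in> Z \<and>
     (\<forall>xs y xs'. (xs, y) \<in> Z \<longrightarrow> xs' \<in> PiE I W \<longrightarrow> (\<forall>i\<in>I. (xs i, xs' i) \<in> R i) \<longrightarrow>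
        (\<exists>y'. (y, y') \<in> RG \<and> (xs', y') \<in> Z)) \<and>
     (\<forall>xs y A. (xs, y) \<in> Z \<longrightarrow> A \<subseteq> T \<longrightarrow> (\<forall>i\<in>I. xs i \<in> g i ` A) \<longrightarrow> y \<in> h ` A)"

text \<open>Finite trees are taken with carriers in nat; since the condition is
  invariant under isomorphism of trees and every finite tree is isomorphic to one on nat,
  this is equivalent to quantifying over all finite trees.\<close>
definition simF ::
  "'i set \<Rightarrow> ('i \<Rightarrow> 'a set) \<Rightarrow> ('i \<Rightarrow> ('a \<times> 'a) set) \<Rightarrow> 'b set \<Rightarrow> ('b \<times> 'b) set \<Rightarrow> bool" where
  "simF I W R WG RG \<longleftrightarrow>
     (\<forall>(T :: nat set) RT w h. finite_tree_root T RT w \<longrightarrow> is_hom T RT WG RG h \<longrightarrow>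
        (\<exists>g Z. (\<forall>i\<in>I. is_hom T RT (W i) (R i) (g i)) \<and> simZ I W R g WG RG h T w Z))"

end

theory Submission imports Defs "HOL-Library.Nat_Bijection" begin


fun vars :: "spf \<Rightarrow> nat list" where
  "vars (Var p) = [p]" | "vars Top = []" | "vars (Conj a b) = vars a @ vars b" | "vars (Dia a) = []"
fun dias :: "spf \<Rightarrow> spf list" where
  "dias (Var p) = []" | "dias Top = []" | "dias (Conj a b) = dias a @ dias b" | "dias (Dia a) = [a]"

lemma sat_flat: "sat R V x \<phi> \<longleftrightarrow> (\<forall>p\<in>set (vars \<phi>). x \<in> V p) \<and> (\<forall>a\<in>set (dias \<phi>). \<exists>y. (x,y)\<in>R \<and> sat R V y a)"
  by (induction \<phi>) auto

lemma dias_size: "a \<in> set (dias \<phi>) \<Longrightarrow> size a < size \<phi>"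
  by (induction \<phi>) auto
lemma dias_len: "length (dias \<phi>) \<le> size \<phi>"
  by (induction \<phi>) auto

fun valid :: "spf \<Rightarrow> nat list \<Rightarrow> bool" where
  "valid \<phi> [] = True" | "valid \<phi> (i#q) = (i < length (dias \<phi>) \<and> valid (dias \<phi> ! i) q)"
fun sub :: "spf \<Rightarrow> nat list \<Rightarrow> spf" where
  "sub \<phi> [] = \<phi>" | "sub \<phi> (i#q) = sub (dias \<phi> ! i) q"

lemma valid_bound: "valid \<phi> q \<Longrightarrow> length q \<le> size \<phi> \<and> set q \<subseteq> {..<size \<phi>}"
proof (induction q arbitrary: \<phi>)
  case (Cons i q)
  then have i: "i < length (dias \<phi>)" and v: "valid (dias \<phi> ! i) q" by auto
  have s: "size (dias \<phi> ! i) < size \<phi>" using i dias_size nth_mem by blast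
  have "i < size \<phi>" using i dias_len[of \<phi>] by linarith
  with Cons.IH[OF v] s show ?case by auto
qed simp

lemma finite_valid: "finite {q. valid \<phi> q}"
proof -
  have "{q. valid \<phi> q} \<subseteq> {xs. set xs \<subseteq> {..<size \<phi>} \<and> length xs \<le> size \<phi>}"
    using valid_bound by blast
  then show ?thesis using finite_lists_length_le[of "{..<size \<phi>}" "size \<phi>"] finite_subset by blast
qed

lemma valid_app: "valid \<phi> (q @ r) \<longleftrightarrow> valid \<phi> q \<and> valid (sub \<phi> q) r"
  by (induction q arbitrary: \<phi>) auto

lemma sub_app: "sub \<phi> (q @ r) = sub (sub \<phi> q) r"
  by (induction q arbitrary: \<phi>) auto

definition RL :: "spf \<Rightarrow> (nat list \<times> nat list) set" where
  "RL \<phi> = {(a,b). valid \<phi> a \<and> valid \<phi> b \<and> (\<exists>i. b = a @ [i])}"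

lemma rpath_prefix:
  assumes "rpath (RL \<phi>) xs" "k \<le> j" "j < length xs"
  shows "(\<exists>ys. xs ! j = xs ! k @ ys) \<and> length (xs ! j) = length (xs ! k) + (j - k)"
  using assms(2,3)
proof (induction j)
  case 0 then show ?case by auto
next
  case (Suc j)
  show ?case
  proof (cases "k = Suc j")
    case False
    then have kj: "k \<le> j" using Suc by auto
    from Suc.IH[OF kj] Suc.prems obtain ys where ys: "xs ! j = xs ! k @ ys"
      and l: "length (xs ! j) = length (xs ! k) + (j - k)" by auto
    from assms(1) Suc.prems have "(xs ! j, xs ! Suc j) \<in> RL \<phi>" unfolding rpath_def by auto
    then obtain i where "xs ! Suc j = xs ! j @ [i]" unfolding RL_def by auto
    with ys l kj show ?thesis by (auto simp: Suc_diff_le)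
  qed auto
qed

lemma rpath_take:
  assumes "rpath (RL \<phi>) xs" "hd xs = []" "k < length xs"
  shows "xs ! k = take k (last xs) \<and> length (last xs) = length xs - 1"
proof -
  have ne: "xs \<noteq> []" using assms unfolding rpath_def by auto
  have h0: "xs ! 0 = []" using assms(2) ne by (simp add: hd_conv_nth)
  have lst: "last xs = xs ! (length xs - 1)" using ne by (simp add: last_conv_nth)
  have "k \<le> length xs - 1" "length xs - 1 < length xs" using assms(3) by auto
  from rpath_prefix[OF assms(1) this] obtain ys where
    "last xs = xs ! k @ ys" using lst by auto
  moreover have "length (xs ! k) = k"
    using rpath_prefix[OF assms(1), of 0 k] assms(3) h0 by auto
  moreover have "length (last xs) = length xs - 1"
    using rpath_prefix[OF assms(1), of 0 "length xs - 1"] ne h0 lst by auto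
  ultimately show ?thesis by simp
qed

lemma tree_RL: "finite_tree_root {q. valid \<phi> q} (RL \<phi>) []"
  unfolding finite_tree_root_def
proof (intro conjI ballI)
  show "finite {q. valid \<phi> q}" by (rule finite_valid)
  show "is_frame {q. valid \<phi> q} (RL \<phi>)" unfolding is_frame_def RL_def by auto
  show "irrefl (RL \<phi>)" unfolding irrefl_def RL_def by auto
  show "[] \<in> {q. valid \<phi> q}" by simp
  fix x assume x: "x \<in> {q. valid \<phi> q}"
  define P where "P = map (\<lambda>k. take k x) [0..<Suc (length x)]"
  have "rpath (RL \<phi>) P \<and> hd P = [] \<and> last P = x"
  proof (intro conjI)
    show "rpath (RL \<phi>) P" unfolding rpath_def P_def
    proof (intro conjI allI impI)
      fix i assume i: "Suc i < length (map (\<lambda>k. take k x) [0..<Suc (length x)])"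
      then have il: "i < length x" by simp
      have vx: "valid \<phi> x" using x by simp
      have vt: "valid \<phi> (take k x)" for k using vx valid_app[of \<phi> "take k x" "drop k x"] by simp
      have ts: "take (Suc i) x = take i x @ [x ! i]" using il by (simp add: take_Suc_conv_app_nth)
      show "(map (\<lambda>k. take k x) [0..<Suc (length x)] ! i,
              map (\<lambda>k. take k x) [0..<Suc (length x)] ! Suc i) \<in> RL \<phi>"
      proof -
        have e1: "map (\<lambda>k. take k x) [0..<Suc (length x)] ! i = take i x"
          using il by (simp only: nth_map_upt) simp
        have e2: "map (\<lambda>k. take k x) [0..<Suc (length x)] ! Suc i = take (Suc i) x"
          using il by (simp only: nth_map_upt) simp
        show ?thesis unfolding e1 e2 RL_def using vt ts by (metis (mono_tags, lifting) case_prodI mem_Collect_eq)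
      qed
    qed simp
    show "hd P = []" unfolding P_def by (simp add: hd_map del: upt_Suc)
    show "last P = x" unfolding P_def by (simp add: last_map del: upt_Suc)
  qed
  moreover have "ys = P" if "rpath (RL \<phi>) ys" "hd ys = []" "last ys = x" for ys
  proof -
    have ne: "ys \<noteq> []" using that unfolding rpath_def by auto
    have L: "length ys = Suc (length x)"
      using rpath_take[OF that(1,2), of 0] ne that(3) by auto
    show ?thesis
    proof (rule nth_equalityI)
      show "length ys = length P" using L unfolding P_def by simp
      fix k assume "k < length ys"
      then show "ys ! k = P ! k" using rpath_take[OF that(1,2), of k] that(3) L unfolding P_def
        by (simp del: upt_Suc add: nth_map_upt)
    qed
  qed
  ultimately show "\<exists>!xs. rpath (RL \<phi>) xs \<and> hd xs = [] \<and> last xs = x" by blast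
qed




abbreviation "enc \<equiv> list_encode"
abbreviation "dec \<equiv> list_decode"

lemma mem_mp: "(a,b) \<in> map_prod enc enc ` R \<longleftrightarrow> (dec a, dec b) \<in> R"
proof
  assume "(dec a, dec b) \<in> R"
  then have "map_prod enc enc (dec a, dec b) \<in> map_prod enc enc ` R" by blast
  then show "(a,b) \<in> map_prod enc enc ` R" by simp
qed auto

lemma rpath_mp: "rpath (map_prod enc enc ` R) ys \<longleftrightarrow> rpath R (map dec ys)"
  unfolding rpath_def by (auto simp: mem_mp)

lemma map_dec_enc: "map enc (map dec ys) = ys" by (induction ys) auto
lemma map_enc_dec: "map dec (map enc ys) = ys" by (induction ys) auto

lemma tree_transfer:
  assumes "finite_tree_root T R r"
  shows "finite_tree_root (enc ` T) (map_prod enc enc ` R) (enc r)"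
  unfolding finite_tree_root_def
proof (intro conjI ballI)
  show "finite (enc ` T)" using assms unfolding finite_tree_root_def by auto
  show "is_frame (enc ` T) (map_prod enc enc ` R)" using assms unfolding finite_tree_root_def is_frame_def by auto
  show "irrefl (map_prod enc enc ` R)" using assms unfolding finite_tree_root_def irrefl_def by (auto simp: list_encode_eq)
  show "enc r \<in> enc ` T" using assms unfolding finite_tree_root_def by auto
  fix x assume "x \<in> enc ` T"
  then obtain x0 where x0: "x0 \<in> T" "x = enc x0" by auto
  have "\<exists>!xs. rpath R xs \<and> hd xs = r \<and> last xs = x0"
    using assms x0(1) unfolding finite_tree_root_def by blast
  then obtain xs where xsP: "rpath R xs \<and> hd xs = r \<and> last xs = x0"
    and unP: "\<And>zs. rpath R zs \<and> hd zs = r \<and> last zs = x0 \<Longrightarrow> zs = xs"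
    by (rule ex1E) blast
  from xsP have xs: "rpath R xs" "hd xs = r" "last xs = x0" by auto
  have un: "\<And>zs. rpath R zs \<Longrightarrow> hd zs = r \<Longrightarrow> last zs = x0 \<Longrightarrow> zs = xs"
    using unP by blast
  have ne: "xs \<noteq> []" using xs unfolding rpath_def by auto
  show "\<exists>!ys. rpath (map_prod enc enc ` R) ys \<and> hd ys = enc r \<and> last ys = x"
  proof (rule ex1I[of _ "map enc xs"])
    show "rpath (map_prod enc enc ` R) (map enc xs) \<and> hd (map enc xs) = enc r \<and> last (map enc xs) = x"
      using xs ne x0 by (simp add: rpath_mp map_enc_dec hd_map last_map comp_def)
    fix ys assume ys: "rpath (map_prod enc enc ` R) ys \<and> hd ys = enc r \<and> last ys = x"
    then have ne2: "ys \<noteq> []" unfolding rpath_def by auto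
    have "map dec ys = xs"
      apply (rule un) using ys ne2 x0 by (auto simp: rpath_mp hd_map last_map)
    then show "ys = map enc xs" using map_dec_enc[of ys] by simp
  qed
qed

lemma sat_transfer: "sat (map_prod enc enc ` R) (\<lambda>p. enc ` L p) n \<phi> \<longleftrightarrow> sat R L (dec n) \<phi>"
proof (induction \<phi> arbitrary: n)
  case (Var p)
  have "n \<in> enc ` L p \<longleftrightarrow> dec n \<in> L p"
    by (metis image_iff list_decode_inverse list_encode_inverse)
  then show ?case by simp
next
  case (Dia a)
  show ?case
  proof
    assume "sat (map_prod enc enc ` R) (\<lambda>p. enc ` L p) n (Dia a)"
    then show "sat R L (dec n) (Dia a)" using Dia by (auto simp: mem_mp)
  next
    assume "sat R L (dec n) (Dia a)"
    then obtain y where "(dec n, y) \<in> R" "sat R L y a" by auto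
    then show "sat (map_prod enc enc ` R) (\<lambda>p. enc ` L p) n (Dia a)"
      using Dia[of "enc y"] by (auto simp: mem_mp intro!: exI[of _ "enc y"])
  qed
qed auto

lemma sat_hom: "(\<forall>x y. (x,y) \<in> R1 \<longrightarrow> (g x, g y) \<in> R2) \<Longrightarrow> sat R1 L x \<phi> \<Longrightarrow> sat R2 (\<lambda>p. g ` L p) (g x) \<phi>"
  by (induction \<phi> arbitrary: x) auto

lemma sat_mono: "(\<forall>p. V p \<subseteq> V' p) \<Longrightarrow> sat R V x \<phi> \<Longrightarrow> sat R V' x \<phi>"
  by (induction \<phi> arbitrary: x) auto

definition wit where "wit RG V \<phi> x i = (SOME z. (x,z) \<in> RG \<and> sat RG V z (dias \<phi> ! i))"

fun hw where
  "hw RG V \<phi> x [] = x"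
| "hw RG V \<phi> x (i#q) = hw RG V (dias \<phi> ! i) (wit RG V \<phi> x i) q"

lemma wit_ok: "sat RG V x \<phi> \<Longrightarrow> i < length (dias \<phi>) \<Longrightarrow>
   wit RG V \<phi> x i \<in> {z. (x,z) \<in> RG \<and> sat RG V z (dias \<phi> ! i)}"
  unfolding wit_def
proof -
  assume s: "sat RG V x \<phi>" and i: "i < length (dias \<phi>)"
  have m: "dias \<phi> ! i \<in> set (dias \<phi>)" using i by (rule nth_mem)
  have "\<forall>a\<in>set (dias \<phi>). \<exists>y. (x,y)\<in>RG \<and> sat RG V y a" using s sat_flat[of RG V x \<phi>] by simp
  then have ex: "\<exists>z. (x,z) \<in> RG \<and> sat RG V z (dias \<phi> ! i)" using m by blast
  then show "(SOME z. (x,z) \<in> RG \<and> sat RG V z (dias \<phi> ! i)) \<in> {z. (x,z) \<in> RG \<and> sat RG V z (dias \<phi> ! i)}"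
    using someI_ex[OF ex] by simp
qed

lemma hw_ok: "valid \<phi> q \<Longrightarrow> x \<in> WG \<Longrightarrow> sat RG V x \<phi> \<Longrightarrow> is_frame WG RG \<Longrightarrow>
   hw RG V \<phi> x q \<in> WG \<and> sat RG V (hw RG V \<phi> x q) (sub \<phi> q)"
proof (induction q arbitrary: \<phi> x)
  case (Cons i q)
  then have i: "i < length (dias \<phi>)" by simp
  from wit_ok[OF Cons.prems(3) i] Cons.prems(4) have
    "wit RG V \<phi> x i \<in> WG" "sat RG V (wit RG V \<phi> x i) (dias \<phi> ! i)" unfolding is_frame_def by auto
  with Cons show ?case by simp
qed simp

lemma hw_snoc: "hw RG V \<phi> x (q @ [i]) = wit RG V (sub \<phi> q) (hw RG V \<phi> x q) i"
  by (induction q arbitrary: \<phi> x) auto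

lemma tree_witness:
  assumes fr: "is_frame WG RG" and y: "y \<in> WG" and s: "sat RG V y \<sigma>"
  shows "\<exists>(T::nat set) RT w h L. finite_tree_root T RT w \<and> is_hom T RT WG RG h \<and> h w = y \<and>
           (\<forall>p. L p \<subseteq> T \<and> h ` L p \<subseteq> V p) \<and> sat RT L w \<sigma>"
proof -
  define H where "H = hw RG V \<sigma> y"
  define L0 where "L0 p = {q. valid \<sigma> q \<and> p \<in> set (vars (sub \<sigma> q))}" for p
  have satT: "sat (RL \<sigma>) L0 q (sub \<sigma> q)" if "valid \<sigma> q" for q
  proof -
    have "\<forall>q. valid \<sigma> q \<longrightarrow> size (sub \<sigma> q) = n \<longrightarrow> sat (RL \<sigma>) L0 q (sub \<sigma> q)" for n
    proof (induction n rule: less_induct)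
      case (less n)
      show ?case
      proof (intro allI impI)
        fix q assume v: "valid \<sigma> q" and sz: "size (sub \<sigma> q) = n"
        show "sat (RL \<sigma>) L0 q (sub \<sigma> q)"
          unfolding sat_flat[of _ _ q]
        proof (intro conjI ballI)
          fix p assume "p \<in> set (vars (sub \<sigma> q))"
          then show "q \<in> L0 p" using v unfolding L0_def by auto
        next
          fix a assume a: "a \<in> set (dias (sub \<sigma> q))"
          then obtain i where i: "i < length (dias (sub \<sigma> q))" "a = dias (sub \<sigma> q) ! i"
            by (metis in_set_conv_nth)
          have v2: "valid \<sigma> (q @ [i])" using v i by (simp add: valid_app)
          have sb: "sub \<sigma> (q @ [i]) = a" using i by (simp add: sub_app)
          have "size a < n" using a sz dias_size by blast
          from less.IH[OF this] have "valid \<sigma> (q@[i]) \<longrightarrow> size (sub \<sigma> (q@[i])) = size a \<longrightarrow> sat (RL \<sigma>) L0 (q@[i]) (sub \<sigma> (q@[i]))" by blast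
          then have "sat (RL \<sigma>) L0 (q @ [i]) a" using v2 sb by simp
          moreover have "(q, q @ [i]) \<in> RL \<sigma>" using v v2 unfolding RL_def by auto
          ultimately show "\<exists>z. (q, z) \<in> RL \<sigma> \<and> sat (RL \<sigma>) L0 z a" by blast
        qed
      qed
    qed
    then show ?thesis using that by blast
  qed
  have homL: "is_hom {q. valid \<sigma> q} (RL \<sigma>) WG RG H"
    unfolding is_hom_def
  proof (intro conjI allI impI)
    show "H ` {q. valid \<sigma> q} \<subseteq> WG" using hw_ok[OF _ y s fr] unfolding H_def by auto
    fix a b assume "(a, b) \<in> RL \<sigma>"
    then obtain i where ab: "valid \<sigma> a" "valid \<sigma> b" "b = a @ [i]" unfolding RL_def by auto
    then have i: "i < length (dias (sub \<sigma> a))" by (simp add: valid_app)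
    have "sat RG V (H a) (sub \<sigma> a)" using hw_ok[OF ab(1) y s fr] unfolding H_def by auto
    from wit_ok[OF this i] show "(H a, H b) \<in> RG" unfolding H_def using ab(3) by (simp add: hw_snoc)
  qed
  have labs: "H ` L0 p \<subseteq> V p" for p
  proof
    fix z assume "z \<in> H ` L0 p"
    then obtain q where q: "valid \<sigma> q" "p \<in> set (vars (sub \<sigma> q))" "z = H q" unfolding L0_def by auto
    have "sat RG V (H q) (sub \<sigma> q)" using hw_ok[OF q(1) y s fr] unfolding H_def by auto
    then show "z \<in> V p" using q by (simp add: sat_flat[of RG V "H q" "sub \<sigma> q"])
  qed
  define T where "T = enc ` {q. valid \<sigma> q}"
  define RT where "RT = map_prod enc enc ` RL \<sigma>"
  define L where "L p = enc ` L0 p" for p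
  have 1: "finite_tree_root T RT (enc [])" unfolding T_def RT_def by (rule tree_transfer[OF tree_RL])
  have 2: "is_hom T RT WG RG (H \<circ> dec)"
    using homL unfolding is_hom_def T_def RT_def by (auto simp: mem_mp)
  have 3: "(H \<circ> dec) (enc []) = y" unfolding H_def by simp
  have 4: "\<forall>p. L p \<subseteq> T \<and> (H \<circ> dec) ` L p \<subseteq> V p"
    using labs unfolding L_def T_def L0_def by (auto simp: image_image)
  have 5: "sat RT L (enc []) \<sigma>"
    unfolding RT_def L_def sat_transfer using satT[of "[]"] by simp
  show ?thesis using 1 2 3 4 5 by blast
qed




lemma lemC:
  assumes Z: "simZ I W R g WG RG h T w Z" and fr: "\<forall>i\<in>I. is_frame (W i) (R i)"
    and L: "\<forall>p. L p \<subseteq> T"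
  shows "(xs, y) \<in> Z \<Longrightarrow> (\<forall>i\<in>I. sat (R i) (\<lambda>p. g i ` L p) (xs i) \<tau>) \<Longrightarrow> sat RG (\<lambda>p. h ` L p) y \<tau>"
proof (induction \<tau> arbitrary: xs y)
  case (Var p)
  then show ?case using Z L unfolding simZ_def by simp
next
  case (Dia a)
  have "\<forall>i\<in>I. \<exists>x'. (xs i, x') \<in> R i \<and> sat (R i) (\<lambda>p. g i ` L p) x' a" using Dia.prems(2) by simp
  then have "\<exists>f. \<forall>i\<in>I. (xs i, f i) \<in> R i \<and> sat (R i) (\<lambda>p. g i ` L p) (f i) a" by (rule bchoice)
  then obtain f where f: "\<forall>i\<in>I. (xs i, f i) \<in> R i \<and> sat (R i) (\<lambda>p. g i ` L p) (f i) a" by blast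
  define xs' where "xs' = (\<lambda>i\<in>I. f i)"
  have "xs' \<in> PiE I W" unfolding xs'_def using f fr unfolding is_frame_def by auto
  moreover have "\<forall>i\<in>I. (xs i, xs' i) \<in> R i" using f unfolding xs'_def by simp
  ultimately obtain y' where y': "(y, y') \<in> RG" "(xs', y') \<in> Z" using Z Dia.prems(1) unfolding simZ_def by blast
  have "sat RG (\<lambda>p. h ` L p) y' a" using Dia.IH[OF y'(2)] f unfolding xs'_def by simp
  then show ?case using y' by auto
qed auto

theorem theorem9p1:
  fixes I :: "'i set" and W :: "'i \<Rightarrow> 'a set" and R :: "'i \<Rightarrow> ('a \<times> 'a) set"
    and WG :: "'b set" and RG :: "('b \<times> 'b) set" and \<iota> :: spimp
  assumes "\<forall>i\<in>I. is_frame (W i) (R i)"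
    and "is_frame WG RG"
    and "simF I W R WG RG"
    and "\<forall>i\<in>I. frame_valid (W i) (R i) \<iota>"
  shows "frame_valid WG RG \<iota>"
  unfolding frame_valid_def
proof (intro allI impI ballI)
  fix V y assume V: "\<forall>p. V p \<subseteq> WG" and y: "y \<in> WG" and s: "sat RG V y (fst \<iota>)"
  obtain T RT w h L where T: "finite_tree_root (T::nat set) RT w" and h: "is_hom T RT WG RG h"
    and hw: "h w = y" and L: "\<forall>p. L p \<subseteq> T \<and> h ` L p \<subseteq> V p" and sT: "sat RT L w (fst \<iota>)"
    using tree_witness[OF assms(2) y s] by blast
  obtain g Z where g: "\<forall>i\<in>I. is_hom T RT (W i) (R i) (g i)" and Z: "simZ I W R g WG RG h T w Z"
    using assms(3) T h unfolding simF_def by blast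
  have wT: "w \<in> T" using T unfolding finite_tree_root_def by simp
  have si: "sat (R i) (\<lambda>p. g i ` L p) (g i w) (snd \<iota>)" if i: "i \<in> I" for i
  proof -
    have hi: "is_hom T RT (W i) (R i) (g i)" using g i by blast
    have a1: "\<forall>p. g i ` L p \<subseteq> W i" using hi L unfolding is_hom_def by blast
    have a2: "g i w \<in> W i" using hi wT unfolding is_hom_def by (simp add: image_subset_iff)
    have a3: "sat (R i) (\<lambda>p. g i ` L p) (g i w) (fst \<iota>)"
    proof -
      have "\<forall>x y. (x,y)\<in>RT \<longrightarrow> (g i x, g i y) \<in> R i" using hi unfolding is_hom_def by simp
      then show ?thesis by (rule sat_hom[OF _ sT])
    qed
    have "frame_valid (W i) (R i) \<iota>" using assms(4) i by blast
    then have "(\<forall>p. g i ` L p \<subseteq> W i) \<longrightarrow> (\<forall>x\<in>W i. sat (R i) (\<lambda>p. g i ` L p) x (fst \<iota>) \<longrightarrow> sat (R i) (\<lambda>p. g i ` L p) x (snd \<iota>))"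
      unfolding frame_valid_def by (rule spec)
    then show ?thesis using a1 a2 a3 by blast
  qed
  have z0: "((\<lambda>i\<in>I. g i w), h w) \<in> Z" using Z unfolding simZ_def by blast
  have "sat RG (\<lambda>p. h ` L p) (h w) (snd \<iota>)"
    using lemC[OF Z assms(1), of L, OF _ z0] L si by simp
  then show "sat RG V y (snd \<iota>)" using sat_mono[of "\<lambda>p. h ` L p" V] L hw by blast
qed


end
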